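(* Assume (A1)–(A3). Let $[s,e]$ contain exactly one true change point $\tau_k$, with $s\le\tau_k<e$, and set $n_1=\tau_k-s+1$, $n_2=e-\tau_k$, $n=n_1+n_2$, $\rho=n_1n_2/n$. Then \[ C(s,e)-C(s,\tau_k)-C(\tau_k+1,e)\ge \rho\,\Delta_k^2-\Bigl((4m+2)M+\frac{(2m^2+2m)M}{n}\Bigr). \] If in addition $n_1\ge\ell_T/2$ and $n_2\ge\ell_T/2$, where $\ell_T=\min_{1\le j\le K+1}(\tau_j-\tau_{j-1})$, then \[ C(s,e)-C(s,\tau_k)-C(\tau_k+1,e)\ge \frac{\Delta_\star^2}{4}\ell_T-\Bigl((4m+2)M+\frac{(2m^2+2m)M}{\ell_T}\Bigr). \]
   Context: Let $Y_1,\dots,Y_T$ be random vectors in $\mathbb R^d$ with true change points $0=\tau_0<\tau_1<\dots<\tau_K<\tau_{K+1}=T$. Let $k:\mathbb R^d\times\mathbb R^d\to\mathbb R$ be a positive definite kernel with RKHS $\mathcal H$ and feature map $\phi(y)=k(y,\cdot)$; for a distribution $P$ let $\mu_P=\mathbb E_{Y\sim P}\phi(Y)\in\mathcal H$. For $1\le s\le e\le T$ define $\widehat C(s,e)=\sum_{t=s}^e k(Y_t,Y_t)-\frac{1}{e-s+1}\sum_{i=s}^e\sum_{j=s}^e k(Y_i,Y_j)$ and $C(s,e)=\mathbb E[\widehat C(s,e)]$. (A1) For a fixed integer $m\ge0$, $(Y_t)$ is $m$-dependent: for every $t$, $(Y_1,\dots,Y_t)$ is independent of $(Y_{t+m+1},\dots,Y_T)$;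 for each $k=1,\dots,K+1$, $(Y_t)_{\tau_{k-1}<t\le\tau_k}$ is strictly stationary with marginal $P_k$. (A2) $k$ is bounded and characteristic, $0\le k(x,y)\le M<\infty$. (A3) $\Delta_k^2:=\|\mu_{P_k}-\mu_{P_{k+1}}\|_{\mathcal H}^2>0$ for $k=1,\dots,K$, and $\Delta_\star^2:=\min_k\Delta_k^2>0$. *)

theory Defs
  imports "HOL-Probability.Probability"
begin

definition pos_def_kernel :: "('x \<Rightarrow> 'x \<Rightarrow> real) \<Rightarrow> bool" where
  "pos_def_kernel k \<longleftrightarrow> (\<forall>x y. k x y = k y x) \<and>
     (\<forall>(n::nat) (x::nat \<Rightarrow> 'x) (c::nat \<Rightarrow> real).
        0 \<le> (\<Sum>i<n. \<Sum>j<n. c i * c j * k (x i) (x j)))"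

text \<open>Squared RKHS distance of kernel mean embeddings, ||mu_P - mu_Q||^2,
  unfolded via the reproducing property:
  <mu_P, mu_Q> = int int k(x,y) dP(x) dQ(y).\<close>
definition mmd_sq :: "('x \<Rightarrow> 'x \<Rightarrow> real) \<Rightarrow> 'x measure \<Rightarrow> 'x measure \<Rightarrow> real" where
  "mmd_sq k P Q =
     (\<integral>x. (\<integral>y. k x y \<partial>P) \<partial>P) - 2 * (\<integral>x. (\<integral>y. k x y \<partial>Q) \<partial>P)
     + (\<integral>x. (\<integral>y. k x y \<partial>Q) \<partial>Q)"

definition characteristic_kernel :: "('x::topological_space \<Rightarrow> 'x \<Rightarrow> real) \<Rightarrow> bool" where
  "characteristic_kernel k \<longleftrightarrow>
     (\<forall>P Q. prob_space P \<longrightarrow> sets P = sets borel \<longrightarrow> prob_space Q \<longrightarrow> sets Q = sets borel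
        \<longrightarrow> mmd_sq k P Q = 0 \<longrightarrow> P = Q)"

definition Chat :: "('x \<Rightarrow> 'x \<Rightarrow> real) \<Rightarrow> (nat \<Rightarrow> 'w \<Rightarrow> 'x) \<Rightarrow> nat \<Rightarrow> nat \<Rightarrow> 'w \<Rightarrow> real" where
  "Chat k Y s e \<omega> = (\<Sum>t=s..e. k (Y t \<omega>) (Y t \<omega>))
     - (1 / real (e - s + 1)) * (\<Sum>i=s..e. \<Sum>j=s..e. k (Y i \<omega>) (Y j \<omega>))"

definition Cexp :: "'w measure \<Rightarrow> ('x \<Rightarrow> 'x \<Rightarrow> real) \<Rightarrow> (nat \<Rightarrow> 'w \<Rightarrow> 'x) \<Rightarrow> nat \<Rightarrow> nat \<Rightarrow> real" where
  "Cexp M k Y s e = (\<integral>\<omega>. Chat k Y s e \<omega> \<partial>M)"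

definition strictly_stationary_on ::
  "'w measure \<Rightarrow> (nat \<Rightarrow> 'w \<Rightarrow> 'x::topological_space) \<Rightarrow> nat set \<Rightarrow> bool" where
  "strictly_stationary_on M Y I \<longleftrightarrow>
     (\<forall>J h. finite J \<longrightarrow> J \<subseteq> I \<longrightarrow> (\<lambda>j. j + h) ` J \<subseteq> I \<longrightarrow>
        distr M (PiM J (\<lambda>_. borel)) (\<lambda>\<omega>. restrict (\<lambda>j. Y j \<omega>) J)
        = distr M (PiM J (\<lambda>_. borel)) (\<lambda>\<omega>. restrict (\<lambda>j. Y (j + h) \<omega>) J))"

definition m_dependent ::
  "'w measure \<Rightarrow> (nat \<Rightarrow> 'w \<Rightarrow> 'x::topological_space) \<Rightarrow> nat \<Rightarrow> nat \<Rightarrow> bool" where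
  "m_dependent M Y T m \<longleftrightarrow>
     (\<forall>t::nat. prob_space.indep_var M
        (PiM {1..t} (\<lambda>_. borel)) (\<lambda>\<omega>. restrict (\<lambda>i. Y i \<omega>) {1..t})
        (PiM {t+m+1..T} (\<lambda>_. borel)) (\<lambda>\<omega>. restrict (\<lambda>i. Y i \<omega>) {t+m+1..T}))"

end

theory Submission
  imports Defs
begin



lemma indep_pair_integral:
  fixes Y :: "nat \<Rightarrow> 'w \<Rightarrow> real ^ 'd" and kern :: "real ^ 'd \<Rightarrow> real ^ 'd \<Rightarrow> real"
  assumes prob: "prob_space M"
    and Y_meas: "\<And>t. t \<in> {1..T} \<Longrightarrow> Y t \<in> borel_measurable M"
    and mdep: "m_dependent M Y T m"
    and ij: "1 \<le> i" "i + m < j" "j \<le> T"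
    and kern_meas: "(\<lambda>(x, y). kern x y) \<in> borel_measurable (borel \<Otimes>\<^sub>M borel)"
    and kern_bdd: "\<And>x y. 0 \<le> kern x y \<and> kern x y \<le> Mb"
  shows "(\<integral>\<omega>. kern (Y i \<omega>) (Y j \<omega>) \<partial>M)
       = (\<integral>x. (\<integral>y. kern x y \<partial>distr M borel (Y j)) \<partial>distr M borel (Y i))"
proof -
  interpret prob_space M by (rule prob)
  have Yi: "Y i \<in> borel_measurable M" and Yj: "Y j \<in> borel_measurable M"
    using ij by (auto intro: Y_meas)
  have ind: "indep_var (PiM {1..i} (\<lambda>_. borel)) (\<lambda>\<omega>. restrict (\<lambda>l. Y l \<omega>) {1..i})
        (PiM {i+m+1..T} (\<lambda>_. borel)) (\<lambda>\<omega>. restrict (\<lambda>l. Y l \<omega>) {i+m+1..T})"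
    using mdep unfolding m_dependent_def by blast
  have "indep_var borel ((\<lambda>f. f i) \<circ> (\<lambda>\<omega>. restrict (\<lambda>l. Y l \<omega>) {1..i}))
        borel ((\<lambda>f. f j) \<circ> (\<lambda>\<omega>. restrict (\<lambda>l. Y l \<omega>) {i+m+1..T}))"
    by (rule indep_var_compose[OF ind]) (use ij in auto)
  moreover have "((\<lambda>f. f i) \<circ> (\<lambda>\<omega>. restrict (\<lambda>l. Y l \<omega>) {1..i})) = Y i"
    "((\<lambda>f. f j) \<circ> (\<lambda>\<omega>. restrict (\<lambda>l. Y l \<omega>) {i+m+1..T})) = Y j"
    using ij by (auto simp: fun_eq_iff)
  ultimately have ind2: "indep_var borel (Y i) borel (Y j)" by simp
  then have eq: "distr M borel (Y i) \<Otimes>\<^sub>M distr M borel (Y j)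
      = distr M (borel \<Otimes>\<^sub>M borel) (\<lambda>\<omega>. (Y i \<omega>, Y j \<omega>))"
    using indep_var_distribution_eq by blast
  interpret Pi: prob_space "distr M borel (Y i)" by (rule prob_space_distr[OF Yi])
  interpret Pj: prob_space "distr M borel (Y j)" by (rule prob_space_distr[OF Yj])
  interpret PP: pair_sigma_finite "distr M borel (Y i)" "distr M borel (Y j)"
    by unfold_locales
  interpret PPp: prob_space "distr M borel (Y i) \<Otimes>\<^sub>M distr M borel (Y j)"
    by (rule prob_space_pair) unfold_locales
  have km: "(\<lambda>(x, y). kern x y) \<in> borel_measurable (distr M borel (Y i) \<Otimes>\<^sub>M distr M borel (Y j))"
    using kern_meas by (simp cong: measurable_cong_sets)
  have int: "integrable (distr M borel (Y i) \<Otimes>\<^sub>M distr M borel (Y j)) (\<lambda>(x, y). kern x y)"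
    by (rule PPp.integrable_const_bound[where B=Mb]) (use km kern_bdd in auto)
  have "(\<integral>\<omega>. kern (Y i \<omega>) (Y j \<omega>) \<partial>M)
      = (\<integral>z. (\<lambda>(x, y). kern x y) z \<partial>distr M (borel \<Otimes>\<^sub>M borel) (\<lambda>\<omega>. (Y i \<omega>, Y j \<omega>)))"
    using kern_meas Yi Yj by (subst integral_distr) auto
  also have "\<dots> = integral\<^sup>L (distr M borel (Y i) \<Otimes>\<^sub>M distr M borel (Y j)) (\<lambda>(x, y). kern x y)"
    by (simp add: eq)
  also have "\<dots> = (\<integral>x. (\<integral>y. kern x y \<partial>distr M borel (Y j)) \<partial>distr M borel (Y i))"
    using PP.integral_fst[OF int] by simp
  finally show ?thesis .
qed



lemma band_sum:
  fixes f :: "nat \<Rightarrow> nat \<Rightarrow> real"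
  assumes f: "\<And>i j. i \<in> I \<Longrightarrow> j \<in> I \<Longrightarrow> \<bar>f i j\<bar> \<le> Mb \<and> (i + m < j \<or> j + m < i \<longrightarrow> f i j = 0)"
    and fin: "finite I" and Mb: "0 \<le> Mb"
  shows "\<bar>\<Sum>i\<in>I. \<Sum>j\<in>I. f i j\<bar> \<le> real (card I) * (2 * real m + 1) * Mb"
proof -
  have row: "\<bar>\<Sum>j\<in>I. f i j\<bar> \<le> (2 * real m + 1) * Mb" if i: "i \<in> I" for i
  proof -
    let ?W = "{i - m..i + m}"
    have "\<bar>\<Sum>j\<in>I. f i j\<bar> \<le> (\<Sum>j\<in>I. \<bar>f i j\<bar>)" by (rule sum_abs)
    also have "\<dots> = (\<Sum>j\<in>I \<inter> ?W. \<bar>f i j\<bar>)"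
    proof (rule sum.mono_neutral_right)
      show "\<forall>j\<in>I - I \<inter> ?W. \<bar>f i j\<bar> = 0"
      proof
        fix j assume "j \<in> I - I \<inter> ?W"
        then have "j \<in> I" "i + m < j \<or> j + m < i" by auto
        then show "\<bar>f i j\<bar> = 0" using f[OF i] by auto
      qed
    qed (use fin in auto)
    also have "\<dots> \<le> (\<Sum>j\<in>I \<inter> ?W. Mb)" by (rule sum_mono) (use f i in auto)
    also have "\<dots> = real (card (I \<inter> ?W)) * Mb" by simp
    also have "\<dots> \<le> real (card ?W) * Mb"
    proof (intro mult_right_mono)
      have "card (I \<inter> ?W) \<le> card ?W" by (rule card_mono) auto
      then show "real (card (I \<inter> ?W)) \<le> real (card ?W)" by (simp only: of_nat_le_iff)
    qed (rule Mb)
    also have "\<dots> \<le> (2 * real m + 1) * Mb"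
    proof (intro mult_right_mono)
      have "card ?W \<le> 2 * m + 1" by simp
      then show "real (card ?W) \<le> 2 * real m + 1" by linarith
    qed (rule Mb)
    finally show ?thesis .
  qed
  have "\<bar>\<Sum>i\<in>I. \<Sum>j\<in>I. f i j\<bar> \<le> (\<Sum>i\<in>I. \<bar>\<Sum>j\<in>I. f i j\<bar>)" by (rule sum_abs)
  also have "\<dots> \<le> (\<Sum>i\<in>I. (2 * real m + 1) * Mb)" by (rule sum_mono) (rule row)
  finally show ?thesis by simp
qed

lemma cross_sum:
  fixes f :: "nat \<Rightarrow> nat \<Rightarrow> real"
  assumes f: "\<And>i j. i \<in> {s..t} \<Longrightarrow> j \<in> {t+1..e} \<Longrightarrow> \<bar>f i j\<bar> \<le> Mb \<and> (i + m < j \<longrightarrow> f i j = 0)"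
    and Mb: "0 \<le> Mb"
  shows "\<bar>\<Sum>i=s..t. \<Sum>j=t+1..e. f i j\<bar> \<le> real m * real m * Mb"
proof -
  let ?A = "{s..t}" and ?B = "{t+1..e}" and ?S1 = "{t+1-m..t}" and ?S2 = "{t+1..t+m}"
  have "\<bar>\<Sum>i\<in>?A. \<Sum>j\<in>?B. f i j\<bar> \<le> (\<Sum>i\<in>?A. \<bar>\<Sum>j\<in>?B. f i j\<bar>)" by (rule sum_abs)
  also have "\<dots> \<le> (\<Sum>i\<in>?A. \<Sum>j\<in>?B. \<bar>f i j\<bar>)" by (intro sum_mono sum_abs)
  also have "\<dots> = (\<Sum>i\<in>?A \<inter> ?S1. \<Sum>j\<in>?B. \<bar>f i j\<bar>)"
  proof (rule sum.mono_neutral_right)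
    show "\<forall>i\<in>?A - ?A \<inter> ?S1. (\<Sum>j\<in>?B. \<bar>f i j\<bar>) = 0"
    proof
      fix i assume i: "i \<in> ?A - ?A \<inter> ?S1"
      show "(\<Sum>j\<in>?B. \<bar>f i j\<bar>) = 0"
      proof (rule sum.neutral, rule ballI)
        fix j assume j: "j \<in> ?B"
        with i have "i + m < j" by auto
        then show "\<bar>f i j\<bar> = 0" using f[of i j] i j by auto
      qed
    qed
  qed auto
  also have "\<dots> = (\<Sum>i\<in>?A \<inter> ?S1. \<Sum>j\<in>?B \<inter> ?S2. \<bar>f i j\<bar>)"
  proof (rule sum.cong[OF refl], rule sum.mono_neutral_right)
    fix i assume i: "i \<in> ?A \<inter> ?S1"
    show "\<forall>j\<in>?B - ?B \<inter> ?S2. \<bar>f i j\<bar> = 0"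
    proof
      fix j assume j: "j \<in> ?B - ?B \<inter> ?S2"
      with i have "i + m < j" by auto
      then show "\<bar>f i j\<bar> = 0" using f[of i j] i j by auto
    qed
  qed auto
  also have "\<dots> \<le> (\<Sum>i\<in>?A \<inter> ?S1. \<Sum>j\<in>?B \<inter> ?S2. Mb)"
    by (intro sum_mono) (use f in auto)
  also have "\<dots> = real (card (?A \<inter> ?S1)) * real (card (?B \<inter> ?S2)) * Mb" by simp
  also have "\<dots> \<le> real m * real m * Mb"
  proof -
    have "card (?A \<inter> ?S1) \<le> card ?S1" by (rule card_mono) auto
    then have c1: "card (?A \<inter> ?S1) \<le> m" by simp
    have "card (?B \<inter> ?S2) \<le> card ?S2" by (rule card_mono) auto
    then have c2: "card (?B \<inter> ?S2) \<le> m" by simp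
    show ?thesis using c1 c2 Mb by (intro mult_right_mono mult_mono) auto
  qed
  finally show ?thesis .
qed



definition Cg :: "(nat \<Rightarrow> nat \<Rightarrow> real) \<Rightarrow> nat \<Rightarrow> nat \<Rightarrow> real" where
  "Cg g s e = (\<Sum>t=s..e. g t t) - (1 / real (e - s + 1)) * (\<Sum>i=s..e. \<Sum>j=s..e. g i j)"

lemma split_ivl:
  fixes s t e :: nat
  assumes "s \<le> t" "t < e"
  shows "(\<Sum>i=s..e. h i) = (\<Sum>i=s..t. h i) + (\<Sum>i=t+1..e. (h i :: real))"
proof -
  have "{s..e} = {s..t} \<union> {t+1..e}" using assms by auto
  then show ?thesis by (simp add: sum.union_disjoint)
qed

lemma coef_bound:
  fixes E x c B :: real
  assumes "\<bar>E\<bar> \<le> x * B" "0 \<le> c" "c \<le> 1 / x" "0 < x"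
  shows "E * c \<ge> - B"
proof -
  have "\<bar>E * c\<bar> = \<bar>E\<bar> * c" using assms by (simp add: abs_mult)
  also have "\<dots> \<le> (x * B) * (1 / x)"
    using assms by (meson abs_ge_zero mult_mono order_trans)
  also have "\<dots> = B" using assms by simp
  finally show ?thesis by linarith
qed

lemma core:
  fixes g :: "nat \<Rightarrow> nat \<Rightarrow> real"
  assumes st: "s \<le> t" "t < e" and Mb: "0 \<le> Mb"
    and GA: "\<And>i j. i \<in> {s..t} \<Longrightarrow> j \<in> {s..t} \<Longrightarrow> \<bar>g i j - a\<bar> \<le> Mb \<and> (i + m < j \<or> j + m < i \<longrightarrow> g i j = a)"
    and GB: "\<And>i j. i \<in> {t+1..e} \<Longrightarrow> j \<in> {t+1..e} \<Longrightarrow> \<bar>g i j - c\<bar> \<le> Mb \<and> (i + m < j \<or> j + m < i \<longrightarrow> g i j = c)"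
    and GAB: "\<And>i j. i \<in> {s..t} \<Longrightarrow> j \<in> {t+1..e} \<Longrightarrow> \<bar>g i j - b\<bar> \<le> Mb \<and> (i + m < j \<longrightarrow> g i j = b)"
    and GBA: "\<And>i j. i \<in> {t+1..e} \<Longrightarrow> j \<in> {s..t} \<Longrightarrow> \<bar>g i j - b\<bar> \<le> Mb \<and> (j + m < i \<longrightarrow> g i j = b)"
  shows "Cg g s e - Cg g s t - Cg g (t+1) e \<ge>
     real (t - s + 1) * real (e - t) / (real (t - s + 1) + real (e - t)) * (a - 2 * b + c)
     - ((4 * real m + 2) * Mb + (2 * real m ^ 2 + 2 * real m) * Mb / (real (t - s + 1) + real (e - t)))"
proof -
  define n1 where "n1 = real (t - s + 1)"
  define n2 where "n2 = real (e - t)"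
  define n where "n = n1 + n2"
  have n1p: "n1 > 0" and n2p: "n2 > 0" and nn: "n = real (e - s + 1)"
    using st by (auto simp: n1_def n2_def n_def)
  define EA where "EA = (\<Sum>i=s..t. \<Sum>j=s..t. g i j - a)"
  define EB where "EB = (\<Sum>i=t+1..e. \<Sum>j=t+1..e. g i j - c)"
  define EAB where "EAB = (\<Sum>i=s..t. \<Sum>j=t+1..e. g i j - b)"
  define EBA where "EBA = (\<Sum>i=t+1..e. \<Sum>j=s..t. g i j - b)"
  have bA: "\<bar>EA\<bar> \<le> n1 * ((2 * real m + 1) * Mb)"
    using band_sum[of "{s..t}" "\<lambda>i j. g i j - a" Mb m] GA Mb st
    unfolding EA_def n1_def by (auto simp: algebra_simps)
  have bB: "\<bar>EB\<bar> \<le> n2 * ((2 * real m + 1) * Mb)"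
    using band_sum[of "{t+1..e}" "\<lambda>i j. g i j - c" Mb m] GB Mb st
    unfolding EB_def n2_def by (auto simp: algebra_simps)
  have bAB: "\<bar>EAB\<bar> \<le> real m * real m * Mb"
    unfolding EAB_def by (rule cross_sum) (use GAB Mb in auto)
  have "EBA = (\<Sum>j=s..t. \<Sum>i=t+1..e. g i j - b)" unfolding EBA_def by (rule sum.swap)
  then have bBA: "\<bar>EBA\<bar> \<le> real m * real m * Mb"
    using cross_sum[of s t e "\<lambda>j i. g i j - b" Mb m] GBA Mb by auto
  have SA: "(\<Sum>i=s..t. \<Sum>j=s..t. g i j) = n1 * n1 * a + EA"
    unfolding EA_def n1_def using st by (simp add: sum_subtractf of_nat_diff Suc_diff_le)
  have SB: "(\<Sum>i=t+1..e. \<Sum>j=t+1..e. g i j) = n2 * n2 * c + EB"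
    unfolding EB_def n2_def using st by (simp add: sum_subtractf)
  have SAB: "(\<Sum>i=s..t. \<Sum>j=t+1..e. g i j) = n1 * n2 * b + EAB"
    unfolding EAB_def n1_def n2_def using st by (simp add: sum_subtractf)
  have SBA: "(\<Sum>i=t+1..e. \<Sum>j=s..t. g i j) = n1 * n2 * b + EBA"
    unfolding EBA_def n1_def n2_def using st by (simp add: sum_subtractf)
  have Sall: "(\<Sum>i=s..e. \<Sum>j=s..e. g i j) = n1 * n1 * a + EA + (n2 * n2 * c + EB)
       + (n1 * n2 * b + EAB) + (n1 * n2 * b + EBA)"
    using split_ivl[OF st] SA SB SAB SBA by (simp add: sum.distrib)
  have diag: "(\<Sum>i=s..e. g i i) = (\<Sum>i=s..t. g i i) + (\<Sum>i=t+1..e. g i i)"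
    by (rule split_ivl[OF st])
  define SAs where "SAs = (\<Sum>i=s..t. \<Sum>j=s..t. g i j)"
  define SBs where "SBs = (\<Sum>i=t+1..e. \<Sum>j=t+1..e. g i j)"
  define Ss where "Ss = (\<Sum>i=s..e. \<Sum>j=s..e. g i j)"
  define dA where "dA = (\<Sum>i=s..t. g i i)"
  define dB where "dB = (\<Sum>i=t+1..e. g i i)"
  have C1: "Cg g s e = dA + dB - (1 / n) * Ss"
    unfolding Cg_def diag nn dA_def dB_def Ss_def by simp
  have C2: "Cg g s t = dA - (1 / n1) * SAs"
    unfolding Cg_def n1_def dA_def SAs_def by simp
  have "real (e - (t + 1) + 1) = n2" using st by (simp add: n2_def)
  then have C3: "Cg g (t+1) e = dB - (1 / n2) * SBs"
    unfolding Cg_def dB_def SBs_def by simp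
  have D: "Cg g s e - Cg g s t - Cg g (t+1) e
     = (n1 * n1 * a + EA) / n1 + (n2 * n2 * c + EB) / n2
       - (n1 * n1 * a + EA + (n2 * n2 * c + EB) + (n1 * n2 * b + EAB) + (n1 * n2 * b + EBA)) / n"
    unfolding C1 C2 C3 using SA SB Sall unfolding SAs_def[symmetric] SBs_def[symmetric] Ss_def[symmetric]
    by simp
  also have "\<dots> = n1 * n2 / n * (a - 2 * b + c) + EA * (1 / n1 - 1 / n) + EB * (1 / n2 - 1 / n)
       - (EAB + EBA) / n"
  proof -
    have nz: "n \<noteq> 0" "n1 \<noteq> 0" "n2 \<noteq> 0" using n1p n2p by (auto simp: n_def)
    show ?thesis using nz
      by (simp add: field_simps) (simp add: n_def algebra_simps)
  qed
  finally have D2: "Cg g s e - Cg g s t - Cg g (t+1) e = n1 * n2 / n * (a - 2 * b + c)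
       + EA * (1 / n1 - 1 / n) + EB * (1 / n2 - 1 / n) - (EAB + EBA) / n" .
  have c1: "EA * (1 / n1 - 1 / n) \<ge> - ((2 * real m + 1) * Mb)"
  proof (rule coef_bound[OF bA])
    have "1 / n \<le> 1 / n1" using n1p n2p by (simp add: n_def frac_le)
    then show "0 \<le> 1 / n1 - 1 / n" by simp
    have "0 \<le> 1 / n" using n1p n2p by (simp add: n_def)
    then show "1 / n1 - 1 / n \<le> 1 / n1" by simp
  qed (rule n1p)
  have c2: "EB * (1 / n2 - 1 / n) \<ge> - ((2 * real m + 1) * Mb)"
  proof (rule coef_bound[OF bB])
    have "1 / n \<le> 1 / n2" using n1p n2p by (simp add: n_def frac_le)
    then show "0 \<le> 1 / n2 - 1 / n" by simp
    have "0 \<le> 1 / n" using n1p n2p by (simp add: n_def)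
    then show "1 / n2 - 1 / n \<le> 1 / n2" by simp
  qed (rule n2p)
  have "EAB + EBA \<le> 2 * real m ^ 2 * Mb" using bAB bBA by (simp add: power2_eq_square)
  also have "\<dots> \<le> (2 * real m ^ 2 + 2 * real m) * Mb" using Mb by (simp add: algebra_simps)
  finally have "(EAB + EBA) / n \<le> (2 * real m ^ 2 + 2 * real m) * Mb / n"
    using n1p n2p by (simp add: n_def divide_right_mono)
  then show ?thesis using D2 c1 c2 unfolding n_def n1_def n2_def by (simp add: algebra_simps)
qed


lemma int_bound:
  fixes f :: "'a \<Rightarrow> real"
  assumes N: "prob_space N" and f: "\<And>x. 0 \<le> f x \<and> f x \<le> B"
  shows "0 \<le> integral\<^sup>L N f \<and> integral\<^sup>L N f \<le> B"
proof -
  interpret prob_space N by (rule N)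
  have B0: "0 \<le> B" using f by (meson order_trans)
  have "0 \<le> integral\<^sup>L N f" using f by (simp add: integral_nonneg)
  moreover have "integral\<^sup>L N f \<le> B"
  proof (cases "integrable N f")
    case True
    then have "integral\<^sup>L N f \<le> integral\<^sup>L N (\<lambda>_. B)"
      by (intro integral_mono) (use f in auto)
    then show ?thesis using prob_space by simp
  next
    case False then show ?thesis using B0 by (simp add: not_integrable_integral_eq)
  qed
  ultimately show ?thesis by simp
qed




theorem mainTheorem6:
  fixes M :: "'w measure"
    and Y :: "nat \<Rightarrow> 'w \<Rightarrow> real ^ 'd"
    and kern :: "real ^ 'd \<Rightarrow> real ^ 'd \<Rightarrow> real"
    and \<tau> :: "nat \<Rightarrow> nat"
    and P :: "nat \<Rightarrow> (real ^ 'd) measure"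
    and T K m kk s e :: nat
    and Mb :: real
  assumes prob: "prob_space M"
    and Y_meas: "\<And>t. t \<in> {1..T} \<Longrightarrow> Y t \<in> borel_measurable M"
    and tau0: "\<tau> 0 = 0"
    and tauT: "\<tau> (K + 1) = T"
    and tau_mono: "\<And>j. j \<le> K \<Longrightarrow> \<tau> j < \<tau> (j + 1)"
    \<comment> \<open>(A1)\<close>
    and mdep: "m_dependent M Y T m"
    and stat: "\<And>j. j \<in> {1..K+1} \<Longrightarrow> strictly_stationary_on M Y {\<tau> (j - 1) + 1 .. \<tau> j}"
    and marg: "\<And>j t. j \<in> {1..K+1} \<Longrightarrow> t \<in> {\<tau> (j - 1) + 1 .. \<tau> j} \<Longrightarrow>
                 distr M borel (Y t) = P j"
    \<comment> \<open>(A2)\<close>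
    and kern_meas: "(\<lambda>(x, y). kern x y) \<in> borel_measurable (borel \<Otimes>\<^sub>M borel)"
    and kern_pd: "pos_def_kernel kern"
    and kern_char: "characteristic_kernel kern"
    and kern_bdd: "\<And>x y. 0 \<le> kern x y \<and> kern x y \<le> Mb"
    \<comment> \<open>(A3)\<close>
    and Delta_pos: "\<And>j. j \<in> {1..K} \<Longrightarrow> mmd_sq kern (P j) (P (j + 1)) > 0"
    \<comment> \<open>the interval [s,e] contains exactly the change point \<tau>_kk\<close>
    and kk: "kk \<in> {1..K}"
    and se: "1 \<le> s" "e \<le> T"
    and s_tau: "s \<le> \<tau> kk" "\<tau> kk < e"
    and only_one: "\<And>j. j \<in> {1..K} \<Longrightarrow> j \<noteq> kk \<Longrightarrow> \<not> (s \<le> \<tau> j \<and> \<tau> j < e)"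
  shows "let n1 = real (\<tau> kk - s + 1); n2 = real (e - \<tau> kk); n = n1 + n2;
             \<rho> = n1 * n2 / n;
             \<Delta>k = mmd_sq kern (P kk) (P (kk + 1));
             \<Delta>star = Min ((\<lambda>j. mmd_sq kern (P j) (P (j + 1))) ` {1..K});
             lT = real (Min ((\<lambda>j. \<tau> j - \<tau> (j - 1)) ` {1..K+1}));
             D = Cexp M kern Y s e - Cexp M kern Y s (\<tau> kk) - Cexp M kern Y (\<tau> kk + 1) e
         in D \<ge> \<rho> * \<Delta>k - ((4 * real m + 2) * Mb + (2 * real m ^ 2 + 2 * real m) * Mb / n)
            \<and> (n1 \<ge> lT / 2 \<and> n2 \<ge> lT / 2 \<longrightarrow>
                D \<ge> \<Delta>star / 4 * lT - ((4 * real m + 2) * Mb + (2 * real m ^ 2 + 2 * real m) * Mb / lT))"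
proof -
  interpret prob_space M by (rule prob)
  define t where "t = \<tau> kk"
  have sym: "\<And>x y. kern x y = kern y x" using kern_pd unfolding pos_def_kernel_def by blast
  have Mb0: "0 \<le> Mb" using kern_bdd by (meson order_trans)
  have kkK: "1 \<le> kk" "kk \<le> K" using kk by auto
  have s_lo: "\<tau> (kk - 1) < s"
  proof (cases "kk = 1")
    case True then show ?thesis using tau0 se by simp
  next
    case False
    then have "kk - 1 \<in> {1..K}" "kk - 1 \<noteq> kk" using kkK by auto
    moreover have "\<tau> (kk - 1) < \<tau> kk" using tau_mono[of "kk - 1"] kkK by simp
    ultimately show ?thesis using only_one[of "kk - 1"] s_tau by fastforce
  qed
  have e_hi: "e \<le> \<tau> (kk + 1)"
  proof (cases "kk = K")
    case True then show ?thesis using tauT se by simp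
  next
    case False
    then have "kk + 1 \<in> {1..K}" "kk + 1 \<noteq> kk" using kkK by auto
    moreover have "\<tau> kk < \<tau> (kk + 1)" using tau_mono[of kk] kkK by simp
    ultimately show ?thesis using only_one[of "kk + 1"] s_tau by fastforce
  qed
  have margA: "distr M borel (Y i) = P kk" if "i \<in> {s..t}" for i
    using marg[of kk i] that kkK s_lo unfolding t_def by auto
  have margB: "distr M borel (Y i) = P (kk + 1)" if "i \<in> {t+1..e}" for i
    using marg[of "kk + 1" i] that kkK e_hi unfolding t_def by auto
  have inT: "i \<in> {1..T}" if "i \<in> {s..e}" for i using that se by auto
  have st: "s \<le> t" "t < e" using s_tau unfolding t_def by auto
  have PA: "prob_space (P kk)"
  proof -
    have "prob_space (distr M borel (Y t))" by (rule prob_space_distr) (use Y_meas inT st in auto)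
    then show ?thesis using margA[of t] st by simp
  qed
  have PB: "prob_space (P (kk + 1))"
  proof -
    have "prob_space (distr M borel (Y e))" by (rule prob_space_distr) (use Y_meas inT st in auto)
    then show ?thesis using margB[of e] st by simp
  qed
  define g where "g i j = (\<integral>\<omega>. kern (Y i \<omega>) (Y j \<omega>) \<partial>M)" for i j
  have intg: "integrable M (\<lambda>\<omega>. kern (Y i \<omega>) (Y j \<omega>))" if "i \<in> {1..T}" "j \<in> {1..T}" for i j
  proof (rule integrable_const_bound[where B = Mb])
    have "(\<lambda>\<omega>. (Y i \<omega>, Y j \<omega>)) \<in> M \<rightarrow>\<^sub>M borel \<Otimes>\<^sub>M borel"
      using Y_meas that by (auto intro!: measurable_Pair)
    from measurable_compose[OF this kern_meas]
    show "(\<lambda>\<omega>. kern (Y i \<omega>) (Y j \<omega>)) \<in> borel_measurable M" by simp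
  qed (use kern_bdd in auto)
  have gbd: "0 \<le> g i j \<and> g i j \<le> Mb" for i j
    unfolding g_def using int_bound[OF prob, of "\<lambda>\<omega>. kern (Y i \<omega>) (Y j \<omega>)" Mb] kern_bdd by blast
  have gsym: "g i j = g j i" for i j unfolding g_def by (simp add: sym)
  have Cexp_eq: "Cexp M kern Y s' e' = Cg g s' e'" if "1 \<le> s'" "e' \<le> T" for s' e'
  proof -
    have I: "\<And>i j. i \<in> {s'..e'} \<Longrightarrow> j \<in> {s'..e'} \<Longrightarrow> integrable M (\<lambda>\<omega>. kern (Y i \<omega>) (Y j \<omega>))"
      using that by (intro intg) auto
    have IA: "integrable M (\<lambda>\<omega>. \<Sum>t=s'..e'. kern (Y t \<omega>) (Y t \<omega>))"
      by (rule Bochner_Integration.integrable_sum) (use I in auto)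
    have IB: "integrable M (\<lambda>\<omega>. \<Sum>i=s'..e'. \<Sum>j=s'..e'. kern (Y i \<omega>) (Y j \<omega>))"
      by (rule Bochner_Integration.integrable_sum, rule Bochner_Integration.integrable_sum) (use I in auto)
    have EA: "(\<integral>\<omega>. (\<Sum>t=s'..e'. kern (Y t \<omega>) (Y t \<omega>)) \<partial>M) = (\<Sum>t=s'..e'. g t t)"
      unfolding g_def by (rule Bochner_Integration.integral_sum) (use I in auto)
    have EB: "(\<integral>\<omega>. (\<Sum>i=s'..e'. \<Sum>j=s'..e'. kern (Y i \<omega>) (Y j \<omega>)) \<partial>M)
        = (\<Sum>i=s'..e'. \<Sum>j=s'..e'. g i j)"
    proof -
      have "(\<integral>\<omega>. (\<Sum>i=s'..e'. \<Sum>j=s'..e'. kern (Y i \<omega>) (Y j \<omega>)) \<partial>M)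
          = (\<Sum>i=s'..e'. (\<integral>\<omega>. (\<Sum>j=s'..e'. kern (Y i \<omega>) (Y j \<omega>)) \<partial>M))"
        by (rule Bochner_Integration.integral_sum, rule Bochner_Integration.integrable_sum) (use I in auto)
      also have "\<dots> = (\<Sum>i=s'..e'. \<Sum>j=s'..e'. g i j)"
        unfolding g_def by (rule sum.cong[OF refl], rule Bochner_Integration.integral_sum) (use I in auto)
      finally show ?thesis .
    qed
    have "Cexp M kern Y s' e' = (\<integral>\<omega>. (\<Sum>t=s'..e'. kern (Y t \<omega>) (Y t \<omega>)) \<partial>M)
        - (\<integral>\<omega>. (1 / real (e' - s' + 1)) * (\<Sum>i=s'..e'. \<Sum>j=s'..e'. kern (Y i \<omega>) (Y j \<omega>)) \<partial>M)"
      unfolding Cexp_def Chat_def by (rule Bochner_Integration.integral_diff) (use IA IB in auto)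
    also have "\<dots> = Cg g s' e'"
      unfolding Cg_def integral_mult_right_zero EA EB by simp
    finally show ?thesis .
  qed
  define a where "a = (\<integral>x. (\<integral>y. kern x y \<partial>P kk) \<partial>P kk)"
  define b where "b = (\<integral>x. (\<integral>y. kern x y \<partial>P (kk + 1)) \<partial>P kk)"
  define c where "c = (\<integral>x. (\<integral>y. kern x y \<partial>P (kk + 1)) \<partial>P (kk + 1))"
  have dbl: "0 \<le> (\<integral>x. (\<integral>y. kern x y \<partial>Q) \<partial>R) \<and> (\<integral>x. (\<integral>y. kern x y \<partial>Q) \<partial>R) \<le> Mb"
    if "prob_space Q" "prob_space R" for Q R
  proof (rule int_bound[OF that(2)])
    fix x show "0 \<le> (\<integral>y. kern x y \<partial>Q) \<and> (\<integral>y. kern x y \<partial>Q) \<le> Mb"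
      by (rule int_bound[OF that(1)]) (use kern_bdd in auto)
  qed
  have abd: "0 \<le> a \<and> a \<le> Mb" "0 \<le> b \<and> b \<le> Mb" "0 \<le> c \<and> c \<le> Mb"
    unfolding a_def b_def c_def using dbl PA PB by auto
  have indep: "g i j = (\<integral>x. (\<integral>y. kern x y \<partial>distr M borel (Y j)) \<partial>distr M borel (Y i))"
    if "i \<in> {s..e}" "j \<in> {s..e}" "i + m < j" for i j
    unfolding g_def
    by (rule indep_pair_integral[OF prob Y_meas mdep _ _ _ kern_meas kern_bdd]) (use that se in auto)
  have close: "\<bar>g i j - z\<bar> \<le> Mb" if "0 \<le> z \<and> z \<le> Mb" for i j z
    using gbd[of i j] that by linarith
  have GA: "\<bar>g i j - a\<bar> \<le> Mb \<and> (i + m < j \<or> j + m < i \<longrightarrow> g i j = a)"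
    if "i \<in> {s..t}" "j \<in> {s..t}" for i j
  proof (intro conjI impI)
    show "\<bar>g i j - a\<bar> \<le> Mb" by (rule close) (rule abd)
    assume "i + m < j \<or> j + m < i"
    then show "g i j = a"
    proof
      assume "i + m < j"
      then show ?thesis using indep[of i j] that margA st unfolding a_def by auto
    next
      assume "j + m < i"
      then show ?thesis using indep[of j i] that margA st gsym[of i j] unfolding a_def by auto
    qed
  qed
  have GB: "\<bar>g i j - c\<bar> \<le> Mb \<and> (i + m < j \<or> j + m < i \<longrightarrow> g i j = c)"
    if "i \<in> {t+1..e}" "j \<in> {t+1..e}" for i j
  proof (intro conjI impI)
    show "\<bar>g i j - c\<bar> \<le> Mb" by (rule close) (rule abd)
    assume "i + m < j \<or> j + m < i"
    then show "g i j = c"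
    proof
      assume "i + m < j"
      then show ?thesis using indep[of i j] that margB st unfolding c_def by auto
    next
      assume "j + m < i"
      then show ?thesis using indep[of j i] that margB st gsym[of i j] unfolding c_def by auto
    qed
  qed
  have GAB: "\<bar>g i j - b\<bar> \<le> Mb \<and> (i + m < j \<longrightarrow> g i j = b)"
    if "i \<in> {s..t}" "j \<in> {t+1..e}" for i j
  proof (intro conjI impI)
    show "\<bar>g i j - b\<bar> \<le> Mb" by (rule close) (rule abd)
    assume "i + m < j"
    then show "g i j = b" using indep[of i j] that margA margB st unfolding b_def by auto
  qed
  have GBA: "\<bar>g i j - b\<bar> \<le> Mb \<and> (j + m < i \<longrightarrow> g i j = b)"
    if "i \<in> {t+1..e}" "j \<in> {s..t}" for i j
  proof (intro conjI impI)
    show "\<bar>g i j - b\<bar> \<le> Mb" by (rule close) (rule abd)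
    assume "j + m < i"
    then show "g i j = b" using indep[of j i] that margA margB st gsym[of i j] unfolding b_def by auto
  qed
  have core_res: "Cg g s e - Cg g s t - Cg g (t+1) e \<ge>
     real (t - s + 1) * real (e - t) / (real (t - s + 1) + real (e - t)) * (a - 2 * b + c)
     - ((4 * real m + 2) * Mb + (2 * real m ^ 2 + 2 * real m) * Mb / (real (t - s + 1) + real (e - t)))"
    by (rule core[OF st Mb0 GA GB GAB GBA])
  have Deq: "Cexp M kern Y s e - Cexp M kern Y s (\<tau> kk) - Cexp M kern Y (\<tau> kk + 1) e
      = Cg g s e - Cg g s t - Cg g (t+1) e"
    using Cexp_eq se st unfolding t_def by simp
  have Dk: "mmd_sq kern (P kk) (P (kk + 1)) = a - 2 * b + c"
    unfolding mmd_sq_def a_def b_def c_def by simp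
  define n1 where "n1 = real (t - s + 1)"
  define n2 where "n2 = real (e - t)"
  define lT where "lT = real (Min ((\<lambda>j. \<tau> j - \<tau> (j - 1)) ` {1..K+1}))"
  define Ds where "Ds = Min ((\<lambda>j. mmd_sq kern (P j) (P (j + 1))) ` {1..K})"
  define D where "D = Cg g s e - Cg g s t - Cg g (t+1) e"
  define Er where "Er = (4 * real m + 2) * Mb"
  define X where "X = (2 * real m ^ 2 + 2 * real m) * Mb"
  have n1p: "n1 > 0" and n2p: "n2 > 0" using st by (auto simp: n1_def n2_def)
  have part1: "D \<ge> n1 * n2 / (n1 + n2) * (a - 2 * b + c) - (Er + X / (n1 + n2))"
    using core_res unfolding D_def n1_def n2_def Er_def X_def .
  have X0: "X \<ge> 0" unfolding X_def using Mb0 by simp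
  have lTpos: "lT > 0"
  proof -
    have "Min ((\<lambda>j. \<tau> j - \<tau> (j - 1)) ` {1..K+1}) \<in> (\<lambda>j. \<tau> j - \<tau> (j - 1)) ` {1..K+1}"
      by (rule Min_in) auto
    then obtain j where j: "j \<in> {1..K+1}" "Min ((\<lambda>j. \<tau> j - \<tau> (j - 1)) ` {1..K+1}) = \<tau> j - \<tau> (j - 1)"
      by (rule imageE) blast
    have "\<tau> (j - 1) < \<tau> (j - 1 + 1)" using tau_mono[of "j - 1"] j by auto
    then show ?thesis using j unfolding lT_def by simp
  qed
  have Ds_le: "Ds \<le> a - 2 * b + c"
    unfolding Ds_def Dk[symmetric] using kk by (intro Min_le) auto
  have Ds0: "Ds \<ge> 0"
  proof -
    have "Ds \<in> (\<lambda>j. mmd_sq kern (P j) (P (j + 1))) ` {1..K}"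
      unfolding Ds_def by (rule Min_in) (use kk in auto)
    then show ?thesis using Delta_pos by force
  qed
  have part2: "D \<ge> Ds / 4 * lT - (Er + X / lT)" if h: "n1 \<ge> lT / 2" "n2 \<ge> lT / 2"
  proof -
    have "lT * (n1 + n2) \<le> 4 * (n1 * n2)"
    proof -
      have "n1 * (2 * n2 - lT) \<ge> 0" "n2 * (2 * n1 - lT) \<ge> 0"
        using h n1p n2p by auto
      then show ?thesis by (simp add: algebra_simps)
    qed
    then have rho: "lT / 4 \<le> n1 * n2 / (n1 + n2)"
      using n1p n2p by (simp add: field_simps)
    have "Ds / 4 * lT = lT / 4 * Ds" by simp
    also have "\<dots> \<le> n1 * n2 / (n1 + n2) * Ds" by (rule mult_right_mono[OF rho Ds0])
    also have "\<dots> \<le> n1 * n2 / (n1 + n2) * (a - 2 * b + c)"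
      using Ds_le n1p n2p by (intro mult_left_mono) auto
    finally have r1: "Ds / 4 * lT \<le> n1 * n2 / (n1 + n2) * (a - 2 * b + c)" .
    have "lT \<le> n1 + n2" using h by simp
    then have "X / (n1 + n2) \<le> X / lT" using lTpos X0 by (intro divide_left_mono) auto
    then show ?thesis using r1 part1 by linarith
  qed
  show ?thesis
    unfolding Let_def Deq Dk[symmetric]
    using part1 part2
    unfolding D_def n1_def n2_def Er_def X_def lT_def Ds_def t_def Dk
    by auto
qed

end
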